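(* Consider the hierarchical Gaussian $K$-armed bandit and the algorithm HierTS described in the context, and let $\sigma_{0,\max} = \max_{i \in \mathcal{V}} \sigma_{0,i}$. Then the inequality $c\, \hat{\sigma}_{t,i}^{-2} \geq \hat{\sigma}_{t+1,i}^{-2}$ holds for every node $i \in \mathcal{V}$ and every round $t$ with $c = 1 + \sigma_{0,\max}^2/\sigma^2$. Moreover, if $\sigma \geq \sigma_{0,\max}$, it holds with $c = 2$.
   Context: Tree and model. Let $\mathcal{T}$ be a rooted tree with node set $\mathcal{V}$, root labeled $1$, in which every internal node has at least $2$ children. For a node $i \neq 1$, $\mathsf{pa}(i)$ is its parent; $\mathsf{ch}(i)$ is the set of children of $i$. The leaves form the action set $\mathcal{A}$, $|\mathcal{A}| = K$. Node parameters $\theta_{*, i} \in \mathbb{R}$ are generated as $\theta_{*, 1} \sim \mathcal{N}(\mu_1, \sigma_{0,1}^2)$ and, for $i \neq 1$, $\theta_{*, i} \mid \theta_{*, \mathsf{pa}(i)} \sim \mathcal{N}(\theta_{*, \mathsf{pa}(i)}, \sigma_{0,i}^2)$, with known $\mu_1$ and $\sigma_{0,i} > 0$. In each round $t$ the agent takes $A_t \in \mathcal{A}$ and observes $Y_t \sim \mathcal{N}(\theta_{*, A_t}, \sigma^2)$ (independent noise, known $\sigma > 0$). The history is $H_t = (A_\ell, Y_\ell)_{\ell < t}$. HierTS samples $\Theta_t$ exactly from the posterior of $(\theta_{*,i})_{i \in \mathcal{V}}$ given $H_t$ and takes $A_t = \arg\max_{a \in \mathcal{A}} \theta_{t,a}$.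 Conditional posterior variances. For a node $i \neq 1$, $\hat{\sigma}_{t,i}^2$ is the variance of $\theta_{*, i}$ conditioned on $H_t$ and on $\theta_{*, \mathsf{pa}(i)}$ (it does not depend on the parent's value); for the root, $\hat{\sigma}_{t,1}^2 = \mathrm{Var}(\theta_{*,1} \mid H_t)$. Explicitly, with $\mathcal{S}_{t,a} = \{\ell < t : A_\ell = a\}$: for an action node $a$, $\hat{\sigma}_{t,a}^{-2} = \sigma_{0,a}^{-2} + |\mathcal{S}_{t,a}| \sigma^{-2}$; for a non-action node $i$, $\hat{\sigma}_{t,i}^{-2} = \sigma_{0,i}^{-2} + \sum_{j \in \mathsf{ch}(i)} \tilde{\sigma}_{t,j}^{-2}$, where recursively $\tilde{\sigma}_{t,j}^{2} = \sigma_{0,j}^2 + \sigma^2/|\mathcal{S}_{t,j}|$ for an action node $j$ (with $\tilde{\sigma}_{t,j}^{-2} = 0$ if $|\mathcal{S}_{t,j}| = 0$) and $\tilde{\sigma}_{t,j}^{2} = \sigma_{0,j}^2 + \big(\sum_{k \in \mathsf{ch}(j)} \tilde{\sigma}_{t,k}^{-2}\big)^{-1}$ for a non-action node $j$. *)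

theory Defs
  imports Complex_Main
begin

text \<open>Rooted trees whose nodes carry labels. Leaves are the actions.\<close>
datatype 'a htree = Leaf 'a | Node 'a "'a htree list"

fun label :: "'a htree \<Rightarrow> 'a" where
  "label (Leaf a) = a"
| "label (Node i ts) = i"

fun labels :: "'a htree \<Rightarrow> 'a list" where
  "labels (Leaf a) = [a]"
| "labels (Node i ts) = i # concat (map labels ts)"

fun leaf_labels :: "'a htree \<Rightarrow> 'a list" where
  "leaf_labels (Leaf a) = [a]"
| "leaf_labels (Node i ts) = concat (map leaf_labels ts)"

fun subtrees :: "'a htree \<Rightarrow> 'a htree list" where
  "subtrees (Leaf a) = [Leaf a]"
| "subtrees (Node i ts) = Node i ts # concat (map subtrees ts)"

fun branching :: "'a htree \<Rightarrow> bool" where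
  "branching (Leaf a) = True"
| "branching (Node i ts) = (length ts \<ge> 2 \<and> (\<forall>s\<in>set ts. branching s))"

definition wf_htree :: "'a htree \<Rightarrow> bool" where
  "wf_htree T \<longleftrightarrow> distinct (labels T) \<and> branching T"

definition nodes :: "'a htree \<Rightarrow> 'a set" where
  "nodes T = set (labels T)"

definition actions :: "'a htree \<Rightarrow> 'a set" where
  "actions T = set (leaf_labels T)"

text \<open>The subtree rooted at node i (well defined for distinct labels).\<close>
definition subtree_at :: "'a htree \<Rightarrow> 'a \<Rightarrow> 'a htree" where
  "subtree_at T i = (THE s. s \<in> set (subtrees T) \<and> label s = i)"

definition pulls :: "(nat \<Rightarrow> 'a) \<Rightarrow> nat \<Rightarrow> 'a \<Rightarrow> nat" where
  "pulls Act t a = card {l. l < t \<and> Act l = a}"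

text \<open>tilde sigma_{t,j}^{-2} for the subtree rooted at j (n = pull counts).
  Infinite variance (no data below j) is encoded as precision 0.\<close>
fun tilde_prec :: "('a \<Rightarrow> real) \<Rightarrow> real \<Rightarrow> ('a \<Rightarrow> nat) \<Rightarrow> 'a htree \<Rightarrow> real" where
  "tilde_prec s0 s n (Leaf a) =
     (if n a = 0 then 0 else 1 / ((s0 a)\<^sup>2 + s\<^sup>2 / real (n a)))"
| "tilde_prec s0 s n (Node j ts) =
     (let S = sum_list (map (tilde_prec s0 s n) ts) in
      if S = 0 then 0 else 1 / ((s0 j)\<^sup>2 + 1 / S))"

fun hat_prec :: "('a \<Rightarrow> real) \<Rightarrow> real \<Rightarrow> ('a \<Rightarrow> nat) \<Rightarrow> 'a htree \<Rightarrow> real" where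
  "hat_prec s0 s n (Leaf a) = 1 / (s0 a)\<^sup>2 + real (n a) / s\<^sup>2"
| "hat_prec s0 s n (Node i ts) = 1 / (s0 i)\<^sup>2 + sum_list (map (tilde_prec s0 s n) ts)"

definition post_prec :: "'a htree \<Rightarrow> ('a \<Rightarrow> real) \<Rightarrow> real \<Rightarrow> (nat \<Rightarrow> 'a) \<Rightarrow> nat \<Rightarrow> 'a \<Rightarrow> real" where
  "post_prec T s0 s Act t i = hat_prec s0 s (pulls Act t) (subtree_at T i)"

end

theory Submission
  imports Defs
begin

definition g :: "real \<Rightarrow> real \<Rightarrow> real" where
 "g c x = (if x = 0 then 0 else 1 / (c + 1 / x))"
lemma g_bounds:
  assumes "c \<ge> 0" "0 \<le> x" "x \<le> y"
  shows "0 \<le> g c x \<and> g c x \<le> g c y \<and> g c y \<le> g c x + (y - x)"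
proof -
  have e: "\<And>z. z > 0 \<Longrightarrow> g c z = z / (c*z + 1)"
    unfolding g_def by (simp add: field_simps)
  show ?thesis
  proof (cases "x = 0")
    case True
    have "y / (1 + c * y) \<le> y" if "y > 0"
    proof -
      have "0 \<le> c*y" using assms by simp
      then have p: "1 + c*y > 0" by linarith
      have "y \<le> y * (1 + c*y)" using assms that by (simp add: algebra_simps)
      then show ?thesis using p by (simp add: divide_le_eq)
    qed
    then show ?thesis using assms True
      by (cases "y = 0") (auto simp: e g_def field_simps intro: mult_nonneg_nonneg)
  next
    case False
    then have xp: "x > 0" "y > 0" using assms by auto
    have d1: "c*x+1>0" "c*y+1 > 0" using xp assms by (auto intro: add_nonneg_pos)
    have eq: "g c y - g c x = (y - x) / ((c*x+1)*(c*y+1))"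
      using d1 by (simp add: e xp field_simps)
    have "(y - x) / ((c*x+1)*(c*y+1)) \<le> y - x"
    proof -
      have "0 \<le> c*x" "0 \<le> c*y" using assms xp by simp_all
      then have "1 * 1 \<le> (c*x+1)*(c*y+1)"
        by (intro mult_mono) auto
      then have "(y - x) * 1 \<le> (y - x) * ((c*x+1)*(c*y+1))" using assms
        by (intro mult_left_mono) auto
      then show ?thesis using d1 by (simp add: divide_le_eq)
    qed
    moreover have "0 \<le> (y - x) / ((c*x+1)*(c*y+1))" using assms d1 by simp
    ultimately show ?thesis using eq xp d1 by (simp add: e)
  qed
qed

lemma distinct_concat_map_same:
  "distinct (concat (map f xs)) \<Longrightarrow> x \<in> set xs \<Longrightarrow> y \<in> set xs \<Longrightarrow>
   v \<in> set (f x) \<Longrightarrow> v \<in> set (f y) \<Longrightarrow> x = y"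
  by (induction xs) auto

lemma labels_subtrees: "s \<in> set (subtrees T) \<Longrightarrow> set (labels s) \<subseteq> set (labels T)"
  by (induction T) auto

lemma label_in_labels: "label s \<in> set (labels s)"
  by (cases s) auto

lemma distinct_subtrees: "s \<in> set (subtrees T) \<Longrightarrow> distinct (labels T) \<Longrightarrow> distinct (labels s)"
proof (induction T)
  case (Leaf x)
  then show ?case by auto
next
  case (Node i ts)
  show ?case
  proof (cases "s = Node i ts")
    case True
    then show ?thesis using Node.prems(2) by simp
  next
    case False
    then obtain t where t: "t \<in> set ts" "s \<in> set (subtrees t)" using Node.prems(1) by auto
    have "distinct (concat (map labels ts))" using Node.prems(2) by simp
    then have "distinct (labels t)" using t(1) unfolding distinct_concat_iff by auto
    then show ?thesis using Node.IH t by blast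
  qed
qed

lemma exists_subtree: "i \<in> set (labels T) \<Longrightarrow> \<exists>s\<in>set (subtrees T). label s = i"
  by (induction T) auto

lemma unique_subtree:
  "distinct (labels T) \<Longrightarrow> s \<in> set (subtrees T) \<Longrightarrow> s' \<in> set (subtrees T) \<Longrightarrow> label s = label s' \<Longrightarrow> s = s'"
proof (induction T arbitrary: s s')
  case (Leaf x)
  then show ?case by simp
next
  case (Node i ts)
  have d: "distinct (i # concat (map labels ts))" using Node.prems(1) by simp
  then have ni: "i \<notin> set (concat (map labels ts))" and dc: "distinct (concat (map labels ts))"
    by simp_all
  have notin: False if "t \<in> set ts" "r \<in> set (subtrees t)" "label r = i" for t r
  proof -
    have "label r \<in> set (labels t)" using labels_subtrees[OF that(2)] label_in_labels[of r] by blast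
    then have "i \<in> set (concat (map labels ts))" using that by auto
    then show False using ni by blast
  qed
  have sub: "\<exists>t\<in>set ts. r \<in> set (subtrees t)" if "r \<in> set (subtrees (Node i ts))" "r \<noteq> Node i ts" for r
    using that by simp
  show ?case
  proof (cases "s = Node i ts")
    case True
    show ?thesis
    proof (rule ccontr)
      assume "s \<noteq> s'"
      then obtain t where t: "t \<in> set ts" "s' \<in> set (subtrees t)" using sub[OF Node.prems(3)] True by blast
      have "label s' = i" using Node.prems(4) True by simp
      then show False using notin t by blast
    qed
  next
    case False
    then obtain t where t: "t \<in> set ts" "s \<in> set (subtrees t)" using sub[OF Node.prems(2)] by blast
    show ?thesis
    proof (cases "s' = Node i ts")
      case True
      have "label s = i" using Node.prems(4) True by simp
      then have False using notin t by blast
      then show ?thesis by blast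
    next
      case False
      then obtain t' where t': "t' \<in> set ts" "s' \<in> set (subtrees t')" using sub[OF Node.prems(3)] by blast
      have a: "label s \<in> set (labels t)" using labels_subtrees[OF t(2)] label_in_labels[of s] by blast
      have b': "label s' \<in> set (labels t')" using labels_subtrees[OF t'(2)] label_in_labels[of s'] by blast
      have b: "label s \<in> set (labels t')" using b' Node.prems(4) by simp
      have tt: "t = t'" by (rule distinct_concat_map_same[OF dc t(1) t'(1) a b])
      have dt: "distinct (labels t)" using dc t(1) unfolding distinct_concat_iff by auto
      have s't: "s' \<in> set (subtrees t)" using t'(2) tt by simp
      show ?thesis by (rule Node.IH[OF t(1) dt t(2) s't Node.prems(4)])
    qed
  qed
qed

lemma subtree_at_props:
  assumes "distinct (labels T)" "i \<in> set (labels T)"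
  shows "subtree_at T i \<in> set (subtrees T) \<and> label (subtree_at T i) = i"
proof -
  obtain s where s: "s \<in> set (subtrees T)" "label s = i" using exists_subtree[OF assms(2)] by blast
  have "\<exists>!s. s \<in> set (subtrees T) \<and> label s = i"
  proof (rule ex1I)
    show "s \<in> set (subtrees T) \<and> label s = i" using s by simp
  next
    fix s' assume "s' \<in> set (subtrees T) \<and> label s' = i"
    then show "s' = s" using unique_subtree[OF assms(1), of s' s] s by simp
  qed
  from theI'[OF this] show ?thesis unfolding subtree_at_def .
qed

definition cnt :: "'a \<Rightarrow> 'a htree \<Rightarrow> real" where
  "cnt a t = real (length (filter ((=) a) (leaf_labels t)))"

lemma cnt_concat:
  "real (length (filter P (concat (map leaf_labels ts)))) =
   sum_list (map (\<lambda>t. real (length (filter P (leaf_labels t)))) ts)"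
  by (induction ts) auto

lemma cnt_le_labels:
  "length (filter P (leaf_labels t)) \<le> length (filter P (labels t))"
proof (induction t)
  case (Leaf x)
  then show ?case by simp
next
  case (Node i ts)
  have "length (filter P (concat (map leaf_labels ts))) \<le> length (filter P (concat (map labels ts)))"
    using Node.IH by (induction ts) (auto intro: add_mono)
  then show ?case by simp
qed

lemma list_bounds:
  fixes f h d :: "'b \<Rightarrow> real"
  assumes "\<forall>x\<in>set xs. 0 \<le> f x \<and> f x \<le> h x \<and> h x \<le> f x + d x"
  shows "0 \<le> sum_list (map f xs) \<and> sum_list (map f xs) \<le> sum_list (map h xs)
    \<and> sum_list (map h xs) \<le> sum_list (map f xs) + sum_list (map d xs)"
  using assms by (induction xs) auto

lemma sum_list_div:
  fixes f :: "'b \<Rightarrow> real"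
  shows "sum_list (map (\<lambda>t. f t / c) ts) = sum_list (map f ts) / c"
  by (induction ts) (auto simp: add_divide_distrib)

lemma tilde_Leaf:
  assumes "s > 0"
  shows "tilde_prec s0 s n (Leaf b) = g ((s0 b)\<^sup>2) (real (n b) / s\<^sup>2)"
  using assms by (simp add: g_def)

lemma tilde_Node:
  "tilde_prec s0 s n (Node j ts) = g ((s0 j)\<^sup>2) (sum_list (map (tilde_prec s0 s n) ts))"
  by (simp add: g_def Let_def)

lemma tilde_incr:
  assumes "s > 0" "n' a = Suc (n a)" "\<forall>b. b \<noteq> a \<longrightarrow> n' b = n b"
  shows "0 \<le> tilde_prec s0 s n t \<and> tilde_prec s0 s n t \<le> tilde_prec s0 s n' t
     \<and> tilde_prec s0 s n' t \<le> tilde_prec s0 s n t + cnt a t / s\<^sup>2"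
proof (induction t)
  case (Leaf b)
  show ?case
  proof (cases "b = a")
    case True
    have "0 \<le> real (n a) / s\<^sup>2" by simp
    moreover have "real (n a) / s\<^sup>2 \<le> real (n' a) / s\<^sup>2" using assms
      by (simp add: divide_right_mono)
    ultimately have "0 \<le> g ((s0 b)\<^sup>2) (real (n a) / s\<^sup>2) \<and>
        g ((s0 b)\<^sup>2) (real (n a) / s\<^sup>2) \<le> g ((s0 b)\<^sup>2) (real (n' a) / s\<^sup>2) \<and>
        g ((s0 b)\<^sup>2) (real (n' a) / s\<^sup>2) \<le> g ((s0 b)\<^sup>2) (real (n a) / s\<^sup>2) + (real (n' a) / s\<^sup>2 - real (n a) / s\<^sup>2)"
      by (intro g_bounds) auto
    moreover have "real (n' a) / s\<^sup>2 - real (n a) / s\<^sup>2 = 1 / s\<^sup>2" using assms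
      by (simp add: diff_divide_distrib[symmetric])
    moreover have "cnt a (Leaf b) = 1" using True by (simp add: cnt_def)
    moreover have "real (n' a) = real (n a) + 1" using assms by simp
    ultimately show ?thesis using True by (simp only: tilde_Leaf[OF assms(1)])
  next
    case False
    have "0 \<le> g ((s0 b)\<^sup>2) (real (n b) / s\<^sup>2)" using g_bounds[of "(s0 b)\<^sup>2" "real (n b) / s\<^sup>2" "real (n b) / s\<^sup>2"]
      by auto
    moreover have "cnt a (Leaf b) = 0" using False by (simp add: cnt_def)
    moreover have "n' b = n b" using assms False by simp
    ultimately show ?thesis by (simp only: tilde_Leaf[OF assms(1)]) simp
  qed
next
  case (Node j ts)
  let ?S = "sum_list (map (tilde_prec s0 s n) ts)"
  let ?S' = "sum_list (map (tilde_prec s0 s n') ts)"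
  let ?K = "sum_list (map (\<lambda>t. cnt a t / s\<^sup>2) ts)"
  have lb: "0 \<le> ?S \<and> ?S \<le> ?S' \<and> ?S' \<le> ?S + ?K"
    using list_bounds[of ts "tilde_prec s0 s n" "tilde_prec s0 s n'" "\<lambda>t. cnt a t / s\<^sup>2"] Node.IH
    by blast
  have K: "?K = cnt a (Node j ts) / s\<^sup>2"
    unfolding cnt_def using cnt_concat[of "(=) a" ts]
    by (simp add: sum_list_div o_def)
  have gb: "0 \<le> g ((s0 j)\<^sup>2) ?S \<and> g ((s0 j)\<^sup>2) ?S \<le> g ((s0 j)\<^sup>2) ?S' \<and>
     g ((s0 j)\<^sup>2) ?S' \<le> g ((s0 j)\<^sup>2) ?S + (?S' - ?S)"
    using lb by (intro g_bounds) auto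
  have A: "0 \<le> g ((s0 j)\<^sup>2) ?S" "g ((s0 j)\<^sup>2) ?S \<le> g ((s0 j)\<^sup>2) ?S'"
     "g ((s0 j)\<^sup>2) ?S' \<le> g ((s0 j)\<^sup>2) ?S + (?S' - ?S)" using gb by auto
  have B: "?S' \<le> ?S + ?K" using lb by auto
  have C: "g ((s0 j)\<^sup>2) ?S' \<le> g ((s0 j)\<^sup>2) ?S + cnt a (Node j ts) / s\<^sup>2"
    using A(3) B K by linarith
  show ?case unfolding tilde_Node using A C by blast
qed

lemma hat_incr:
  assumes "s > 0" "n' a = Suc (n a)" "\<forall>b. b \<noteq> a \<longrightarrow> n' b = n b"
  shows "1 / (s0 (label t))\<^sup>2 \<le> hat_prec s0 s n t
     \<and> hat_prec s0 s n' t \<le> hat_prec s0 s n t + cnt a t / s\<^sup>2"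
proof (cases t)
  case (Leaf b)
  show ?thesis
  proof (cases "b = a")
    case True
    then show ?thesis using Leaf assms by (simp add: cnt_def add_divide_distrib)
  next
    case False
    then show ?thesis using Leaf assms by (simp add: cnt_def)
  qed
next
  case (Node j ts)
  let ?S = "sum_list (map (tilde_prec s0 s n) ts)"
  let ?S' = "sum_list (map (tilde_prec s0 s n') ts)"
  let ?K = "sum_list (map (\<lambda>t. cnt a t / s\<^sup>2) ts)"
  have "\<forall>x\<in>set ts. 0 \<le> tilde_prec s0 s n x \<and> tilde_prec s0 s n x \<le> tilde_prec s0 s n' x
     \<and> tilde_prec s0 s n' x \<le> tilde_prec s0 s n x + cnt a x / s\<^sup>2"
    using tilde_incr[OF assms] by blast
  then have lb: "0 \<le> ?S \<and> ?S \<le> ?S' \<and> ?S' \<le> ?S + ?K"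
    by (rule list_bounds)
  have K: "?K = cnt a (Node j ts) / s\<^sup>2"
    unfolding cnt_def using cnt_concat[of "(=) a" ts]
    by (simp add: sum_list_div o_def)
  have B: "0 \<le> ?S" "?S' \<le> ?S + cnt a (Node j ts) / s\<^sup>2" using lb K by auto
  have C: "1 / (s0 j)\<^sup>2 \<le> 1 / (s0 j)\<^sup>2 + ?S" using B by linarith
  have D: "1 / (s0 j)\<^sup>2 + ?S' \<le> 1 / (s0 j)\<^sup>2 + ?S + cnt a (Node j ts) / s\<^sup>2"
    using B by linarith
  show ?thesis unfolding Node hat_prec.simps label.simps using C D by blast
qed

lemma pulls_Suc:
  "pulls Act (Suc t) (Act t) = Suc (pulls Act t (Act t))"
  "b \<noteq> Act t \<Longrightarrow> pulls Act (Suc t) b = pulls Act t b"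
proof -
  have "{l. l < Suc t \<and> Act l = Act t} = insert t {l. l < t \<and> Act l = Act t}" by auto
  then show "pulls Act (Suc t) (Act t) = Suc (pulls Act t (Act t))"
    unfolding pulls_def by simp
  assume "b \<noteq> Act t"
  then have "{l. l < Suc t \<and> Act l = b} = {l. l < t \<and> Act l = b}" by (auto simp: less_Suc_eq)
  then show "pulls Act (Suc t) b = pulls Act t b" unfolding pulls_def by simp
qed

theorem lemma4:
  fixes T :: "'a htree" and \<sigma>0 :: "'a \<Rightarrow> real" and \<sigma> :: real and Act :: "nat \<Rightarrow> 'a"
  assumes "wf_htree T"
    and "\<forall>i\<in>nodes T. \<sigma>0 i > 0"
    and "\<sigma> > 0"
    and "\<forall>l. Act l \<in> actions T"
  shows "(\<forall>t. \<forall>i\<in>nodes T.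
            (1 + (Max (\<sigma>0 ` nodes T))\<^sup>2 / \<sigma>\<^sup>2) * post_prec T \<sigma>0 \<sigma> Act t i
              \<ge> post_prec T \<sigma>0 \<sigma> Act (Suc t) i)
       \<and> (\<sigma> \<ge> Max (\<sigma>0 ` nodes T) \<longrightarrow>
           (\<forall>t. \<forall>i\<in>nodes T.
              2 * post_prec T \<sigma>0 \<sigma> Act t i \<ge> post_prec T \<sigma>0 \<sigma> Act (Suc t) i))"
proof -
  define M where "M = Max (\<sigma>0 ` nodes T)"
  have dT: "distinct (labels T)" using assms(1) unfolding wf_htree_def by auto
  have main: "(1 + M\<^sup>2 / \<sigma>\<^sup>2) * post_prec T \<sigma>0 \<sigma> Act t i \<ge> post_prec T \<sigma>0 \<sigma> Act (Suc t) i
      \<and> post_prec T \<sigma>0 \<sigma> Act t i \<ge> 0"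
    if i: "i \<in> nodes T" for t i
  proof -
    define st where "st = subtree_at T i"
    have st: "st \<in> set (subtrees T)" "label st = i"
      using subtree_at_props[OF dT] i unfolding st_def nodes_def by auto
    have dst: "distinct (labels st)" using distinct_subtrees[OF st(1) dT] .
    define a where "a = Act t"
    have cnt1: "cnt a st \<le> 1"
    proof -
      have "length (filter ((=) a) (labels st)) = card ({x. a = x} \<inter> set (labels st))"
        using distinct_length_filter[OF dst] by simp
      also have "\<dots> \<le> card {a}" by (rule card_mono) auto
      finally show ?thesis using cnt_le_labels[of "(=) a" st] unfolding cnt_def by simp
    qed
    have hi: "1 / (\<sigma>0 i)\<^sup>2 \<le> hat_prec \<sigma>0 \<sigma> (pulls Act t) st
      \<and> hat_prec \<sigma>0 \<sigma> (pulls Act (Suc t)) st \<le> hat_prec \<sigma>0 \<sigma> (pulls Act t) st + cnt a st / \<sigma>\<^sup>2"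
    proof -
      have "\<forall>b. b \<noteq> a \<longrightarrow> pulls Act (Suc t) b = pulls Act t b"
        using pulls_Suc(2)[of _ Act t] unfolding a_def by simp
      from hat_incr[OF assms(3) pulls_Suc(1)[of Act t, folded a_def] this, of \<sigma>0 st]
      show ?thesis by (simp only: st(2))
    qed
    have pos: "\<sigma>0 i > 0" using assms(2) i by auto
    have fin: "finite (\<sigma>0 ` nodes T)" unfolding nodes_def by simp
    have le: "\<sigma>0 i \<le> M" unfolding M_def using fin i by auto
    have sq: "(\<sigma>0 i)\<^sup>2 \<le> M\<^sup>2" using pos le by (simp add: power_mono)
    have key: "1 / \<sigma>\<^sup>2 \<le> M\<^sup>2 / \<sigma>\<^sup>2 * (1 / (\<sigma>0 i)\<^sup>2)"
      using sq pos assms(3) by (simp add: field_simps)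
    have c1: "cnt a st / \<sigma>\<^sup>2 \<le> 1 / \<sigma>\<^sup>2" using cnt1 assms(3) by (simp add: divide_right_mono)
    define h where "h = hat_prec \<sigma>0 \<sigma> (pulls Act t) st"
    have "M\<^sup>2 / \<sigma>\<^sup>2 * (1 / (\<sigma>0 i)\<^sup>2) \<le> M\<^sup>2 / \<sigma>\<^sup>2 * h"
      using hi unfolding h_def by (intro mult_left_mono) auto
    moreover have "0 \<le> h"
    proof -
      have "0 \<le> 1 / (\<sigma>0 i)\<^sup>2" by simp
      moreover have "1 / (\<sigma>0 i)\<^sup>2 \<le> h" using hi unfolding h_def by blast
      ultimately show ?thesis by linarith
    qed
    ultimately show ?thesis using hi key c1
      unfolding post_prec_def st_def[symmetric] h_def[symmetric]
      by (simp add: algebra_simps)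
  qed
  show ?thesis
  proof (intro conjI impI allI ballI)
    fix t i assume "i \<in> nodes T"
    then show "(1 + (Max (\<sigma>0 ` nodes T))\<^sup>2 / \<sigma>\<^sup>2) * post_prec T \<sigma>0 \<sigma> Act t i
              \<ge> post_prec T \<sigma>0 \<sigma> Act (Suc t) i" using main unfolding M_def by blast
  next
    fix t i assume h: "\<sigma> \<ge> Max (\<sigma>0 ` nodes T)" "i \<in> nodes T"
    have fin: "finite (\<sigma>0 ` nodes T)" unfolding nodes_def by simp
    have "\<sigma>0 i \<le> M" unfolding M_def using fin h(2) by auto
    then have Mp: "0 \<le> M" using assms(2) h(2) by fastforce
    have "M\<^sup>2 / \<sigma>\<^sup>2 \<le> 1" using h(1) Mp assms(3) unfolding M_def[symmetric]
      by (simp add: divide_le_eq power_mono)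
    then have "(1 + M\<^sup>2 / \<sigma>\<^sup>2) * post_prec T \<sigma>0 \<sigma> Act t i \<le> 2 * post_prec T \<sigma>0 \<sigma> Act t i"
      using main[OF h(2)] by (intro mult_right_mono) auto
    then show "2 * post_prec T \<sigma>0 \<sigma> Act t i \<ge> post_prec T \<sigma>0 \<sigma> Act (Suc t) i"
      using conjunct1[OF main[OF h(2), of t]] by linarith
  qed
qed

end
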